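(* Let $p>3$ be a prime. Then for each $k=1,2,\ldots,(p-1)/2$, $$\sum_{j=2}^{p-2k}\frac{\binom{k+j-1}{k}}{k+j}\equiv(-1)^k\left(\frac32\sum_{j=1}^k\frac{\binom{2j}{j}}{j}-\frac{\binom{2k}{k}}{k}\right)-\frac{1}{k+1}\pmod p.$$
   Context: Congruences between rational numbers are understood in the ring of rationals whose denominators are coprime to $p$. *)

theory Defs
  imports Complex_Main "HOL-Computational_Algebra.Primes"
begin

definition rat_cong :: "rat \<Rightarrow> rat \<Rightarrow> int \<Rightarrow> bool" where
  "rat_cong x y p \<longleftrightarrow>
     (\<exists>a b::int. b \<noteq> 0 \<and> coprime b p \<and> p dvd a \<and> x - y = of_int a / of_int b)"

end

theory Submission
  imports Defs "HOL-Number_Theory.Cong"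
begin


lemma rat_ratio:
  assumes "1 \<le> k" "1 \<le> i"
  shows "of_nat ((k+i-1) choose (i-1)) / of_nat i = (of_nat ((k+i-1) choose i) / of_nat k :: rat)"
proof -
  have f: "of_nat ((k+i-1) choose j) = (fact (k+i-1) / (fact j * fact (k+i-1-j)) :: rat)" if "j \<le> k+i-1" for j
    using binomial_fact[OF that] by simp
  obtain a where a: "k = Suc a" using assms by (cases k) auto
  obtain b where b: "i = Suc b" using assms by (cases i) auto
  have e1: "k+i-1-(i-1) = Suc a" "k+i-1-i = a" using a b by auto
  show ?thesis using assms
    apply (subst f, simp) apply (subst f, simp)
    unfolding e1 using a b by (simp add: field_simps)
qed

definition B :: "nat \<Rightarrow> rat" where "B k = (\<Sum>i=1..k. of_nat ((k+i-1) choose i) / of_nat i)"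

lemma B_step:
  assumes "1 \<le> k"
  shows "B (Suc k) = B k + of_nat ((2*k+1) choose (k+1)) / of_nat (k+1) + (of_nat ((2*k) choose k) - 1) / of_nat k"
proof -
  have pas: "of_nat ((Suc k+i-1) choose i) = (of_nat ((k+i-1) choose i) + of_nat ((k+i-1) choose (i-1)) :: rat)" if hi: "i \<in> {1..Suc k}" for i
  proof -
    obtain b where b: "i = Suc b" using hi by (cases i) auto
    have "Suc k + i - 1 = Suc (k+i-1)" using b by simp
    then show ?thesis using b by simp
  qed
  have "B (Suc k) = (\<Sum>i=1..Suc k. of_nat ((k+i-1) choose i) / of_nat i) + (\<Sum>i=1..Suc k. of_nat ((k+i-1) choose (i-1)) / of_nat i)"
    unfolding B_def sum.distrib[symmetric] using pas by (intro sum.cong) (auto simp: add_divide_distrib)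
  also have "(\<Sum>i=1..Suc k. of_nat ((k+i-1) choose i) / of_nat i) = B k + of_nat ((2*k) choose (k+1)) / of_nat (k+1)"
    unfolding B_def by (simp add: mult_2)
  also have "(\<Sum>i=1..Suc k. of_nat ((k+i-1) choose (i-1)) / of_nat i) = (\<Sum>i=1..Suc k. of_nat ((k+i-1) choose i) / (of_nat k::rat))"
    using rat_ratio assms by (intro sum.cong) auto
  also have "\<dots> = (\<Sum>i=1..Suc k. of_nat ((k-1+i) choose i)) / (of_nat k::rat)"
    unfolding sum_divide_distrib using assms by (intro sum.cong) (auto simp: add.commute)
  also have "(\<Sum>i=1..Suc k. of_nat ((k-1+i) choose i)) = (\<Sum>i\<le>Suc k. of_nat ((k-1+i) choose i)) - (1::rat)"
    by (simp add: sum.atMost_Suc_shift atLeast0AtMost[symmetric] sum.atLeast_Suc_atMost)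
  also have "(\<Sum>i\<le>Suc k. of_nat ((k-1+i) choose i)) = (of_nat (Suc (k-1+Suc k) choose Suc k) :: rat)"
    unfolding of_nat_sum[symmetric] sum_choose_lower ..
  also have "Suc (k-1+Suc k) = 2*k+1" using assms by simp
  finally have "B (Suc k) = B k + of_nat ((2*k) choose (k+1)) / of_nat (k+1) + (of_nat ((2*k+1) choose (k+1)) - 1) / of_nat k" by simp
  moreover have "of_nat ((2*k+1) choose (k+1)) = (of_nat ((2*k) choose k) + of_nat ((2*k) choose (k+1)) :: rat)"
    by simp
  moreover have "of_nat ((2*k) choose k) / of_nat (k+1) = (of_nat ((2*k) choose (k+1)) / of_nat k :: rat)"
    using rat_ratio[of k "k+1"] assms by (simp add: mult_2)
  ultimately show ?thesis using assms by (simp add: field_simps)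
qed

definition H :: "nat \<Rightarrow> rat" where "H n = (\<Sum>m=1..n. 1 / of_nat m)"

lemma cen: "((2*k+2) choose (k+1)) = 2 * ((2*k+1) choose (k+1))"
proof -
  have "(2*k+2) choose (k+1) = ((2*k+1) choose k) + ((2*k+1) choose (k+1))" by simp
  moreover have "(2*k+1) choose k = (2*k+1) choose (k+1)"
    using binomial_symmetric[of k "2*k+1"] by (simp add: numeral_eq_Suc)
  ultimately show ?thesis by simp
qed

lemma alg: "(kk::rat) \<noteq> 0 \<Longrightarrow> m \<noteq> 0 \<Longrightarrow> m' = m \<Longrightarrow> G = Y/kk \<Longrightarrow>
  (3/2*s - G - b) + 1/kk + (b + X/m + (Y-1)/kk) = 3/2*(s + 2*X/m') - 2*X/m'"
  by (simp add: field_simps)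

lemma A_id:
  assumes "1 \<le> k"
  shows "H (k-1) + B k = 3/2 * (\<Sum>j=1..k. of_nat ((2*j) choose j) / of_nat j) - of_nat ((2*k) choose k) / of_nat k"
  using assms
proof (induction k rule: nat_induct_at_least)
  case base
  then show ?case by (simp add: H_def B_def)
next
  case (Suc k)
  have h: "H (Suc k - 1) = H (k-1) + 1 / of_nat k"
  proof -
    obtain j where j: "k = Suc j" using Suc(1) by (cases k) auto
    show ?thesis unfolding j H_def by simp
  qed
  have c: "of_nat ((2*Suc k) choose Suc k) = (2 * of_nat ((2*k+1) choose (k+1)) :: rat)"
  proof -
    have e: "2 * Suc k = 2*k+2" "Suc k = k+1" by simp_all
    have c0: "of_nat ((2*k+2) choose (k+1)) = (2 * of_nat ((2*k+1) choose (k+1)) :: rat)"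
      by (simp only: cen of_nat_mult of_nat_numeral)
    show ?thesis using c0 arg_cong2[where f=binomial, OF e] by (simp only:)
  qed
  define g where "g j = (of_nat ((2*j) choose j) / of_nat j :: rat)" for j
  have sg: "(\<Sum>j=1..Suc k. g j) = (\<Sum>j=1..k. g j) + g (Suc k)" by simp
  have gS: "g (Suc k) = 2 * of_nat ((2*k+1) choose (k+1)) / of_nat (Suc k)"
    unfolding g_def c ..
  have IH: "H (k-1) + B k = 3/2 * (\<Sum>j=1..k. g j) - of_nat ((2*k) choose k) / of_nat k"
    using Suc(2) unfolding g_def .
  show ?case
  proof -
    have hk: "H (k-1) = 3/2 * (\<Sum>j=1..k. g j) - of_nat ((2*k) choose k) / of_nat k - B k"
      using IH by (simp only: eq_diff_eq)
    show ?thesis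
      unfolding h B_step[OF Suc(1)] g_def[symmetric] sg gS hk
      by (rule alg) (use Suc(1) in \<open>simp_all add: g_def del: binomial_Suc_Suc\<close>)
  qed
qed


lemma alt:
  assumes "1 \<le> m"
  shows "of_nat ((m-1) choose k) = (\<Sum>i\<le>k. (-1)^(k-i) * of_nat (m choose i) :: rat)"
proof (induction k)
  case 0
  then show ?case by simp
next
  case (Suc k)
  have e: "of_nat (m choose Suc k) = (of_nat ((m-1) choose k) + of_nat ((m-1) choose Suc k) :: rat)"
    using assms by (cases m) auto
  have s: "(\<Sum>i\<le>k. (-1)^(Suc k-i) * of_nat (m choose i)) = - (\<Sum>i\<le>k. (-1)^(k-i) * of_nat (m choose i) :: rat)"
    unfolding sum_negf[symmetric] by (intro sum.cong) (auto simp: Suc_diff_le)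
  show ?case unfolding sum.atMost_Suc s Suc.IH[symmetric] using e by simp
qed

lemma sum_ch_div:
  assumes "1 \<le> i"
  shows "(\<Sum>m=1..N. of_nat (m choose i) / of_nat m) = (of_nat (N choose i) / of_nat i :: rat)"
proof (induction N)
  case 0
  then show ?case using assms by simp
next
  case (Suc N)
  obtain a where a: "i = Suc a" using assms by (cases i) auto
  have e: "of_nat (Suc N) * of_nat (N choose a) = (of_nat (Suc N choose Suc a) * of_nat (Suc a) :: rat)"
    using Suc_times_binomial_eq[of N a] by (metis of_nat_mult)
  have "(of_nat (Suc N choose i) / of_nat (Suc N)) = (of_nat (N choose a) / of_nat i :: rat)"
    using e a by (simp add: field_simps)
  then show ?case using Suc.IH a by (simp add: field_simps)
qed

lemma F_id:
  "(\<Sum>m=1..N. of_nat ((m-1) choose k) / of_nat m) =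
     (-1)^k * H N + (\<Sum>i=1..k. (-1)^(k-i) * of_nat (N choose i) / of_nat i :: rat)"
proof -
  have "(\<Sum>m=1..N. of_nat ((m-1) choose k) / of_nat m) = (\<Sum>m=1..N. \<Sum>i\<le>k. (-1)^(k-i) * (of_nat (m choose i) / (of_nat m::rat)))"
  proof (intro sum.cong refl)
    fix m assume "m \<in> {1..N}"
    then have "of_nat ((m-1) choose k) = (\<Sum>i\<le>k. (-1)^(k-i) * of_nat (m choose i) :: rat)" by (intro alt) auto
    then show "of_nat ((m-1) choose k) / of_nat m = (\<Sum>i\<le>k. (-1)^(k-i) * (of_nat (m choose i) / (of_nat m::rat)))"
      by (simp only: sum_divide_distrib times_divide_eq_right)
  qed
  also have "\<dots> = (\<Sum>i\<le>k. (-1)^(k-i) * (\<Sum>m=1..N. of_nat (m choose i) / (of_nat m::rat)))"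
    unfolding sum_distrib_left by (rule sum.swap)
  also have "\<dots> = (-1)^k * H N + (\<Sum>i=1..k. (-1)^(k-i) * (\<Sum>m=1..N. of_nat (m choose i) / (of_nat m::rat)))"
  proof -
    have "{..k} = insert 0 {1..k}" by auto
    then have "(\<Sum>i\<le>k. (-1)^(k-i) * (\<Sum>m=1..N. of_nat (m choose i) / (of_nat m::rat))) =
       (-1)^(k-0) * (\<Sum>m=1..N. of_nat (m choose 0) / (of_nat m::rat)) + (\<Sum>i=1..k. (-1)^(k-i) * (\<Sum>m=1..N. of_nat (m choose i) / (of_nat m::rat)))"
      by (simp only: sum.insert finite_atLeastAtMost) simp
    then show ?thesis by (simp add: H_def)
  qed
  also have "\<dots> = (-1)^k * H N + (\<Sum>i=1..k. (-1)^(k-i) * of_nat (N choose i) / of_nat i :: rat)"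
  proof (intro arg_cong2[where f="(+)"] refl sum.cong)
    fix i assume "i \<in> {1..k}"
    then have "1 \<le> i" by simp
    show "(-1)^(k-i) * (\<Sum>m=1..N. of_nat (m choose i) / (of_nat m::rat)) = (-1)^(k-i) * of_nat (N choose i) / of_nat i"
      by (simp only: sum_ch_div[OF \<open>1 \<le> i\<close>] times_divide_eq_right)
  qed
  finally show ?thesis .
qed



definition pint :: "int \<Rightarrow> rat \<Rightarrow> bool" where
  "pint p x \<longleftrightarrow> (\<exists>a b::int. b \<noteq> 0 \<and> coprime b p \<and> x = of_int a / of_int b)"

definition cg :: "int \<Rightarrow> rat \<Rightarrow> rat \<Rightarrow> bool" where
  "cg p x y \<longleftrightarrow> (\<exists>z. pint p z \<and> x - y = of_int p * z)"

lemma pint_int: "pint p (of_int a)"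
  unfolding pint_def by (rule exI[of _ a], rule exI[of _ 1]) simp

lemma pint_inv: "b \<noteq> 0 \<Longrightarrow> coprime b p \<Longrightarrow> pint p (1 / of_int b)"
  unfolding pint_def by (rule exI[of _ 1], rule exI[of _ b]) simp

lemma pint_add: "pint p x \<Longrightarrow> pint p y \<Longrightarrow> pint p (x + y)"
proof -
  assume "pint p x" "pint p y"
  then obtain a b c d where h: "b \<noteq> 0" "coprime b p" "x = of_int a / of_int b"
     "d \<noteq> 0" "coprime d p" "y = of_int c / of_int d" unfolding pint_def by (elim exE conjE)
  show ?thesis unfolding pint_def
    by (rule exI[of _ "a*d + c*b"], rule exI[of _ "b*d"]) (use h in \<open>auto simp: field_simps\<close>)
qed

lemma pint_mult: "pint p x \<Longrightarrow> pint p y \<Longrightarrow> pint p (x * y)"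
proof -
  assume "pint p x" "pint p y"
  then obtain a b c d where h: "b \<noteq> 0" "coprime b p" "x = of_int a / of_int b"
     "d \<noteq> 0" "coprime d p" "y = of_int c / of_int d" unfolding pint_def by (elim exE conjE)
  show ?thesis unfolding pint_def
    by (rule exI[of _ "a*c"], rule exI[of _ "b*d"]) (use h in \<open>auto simp: field_simps\<close>)
qed

lemma pint_0: "pint p 0"
  using pint_int[of p 0] by simp

lemma pint_sum: "(\<And>i. i \<in> A \<Longrightarrow> pint p (f i)) \<Longrightarrow> pint p (sum f A)"
proof (induction A rule: infinite_finite_induct)
  case (infinite A)
  then show ?case using pint_0 by simp
next
  case empty
  then show ?case using pint_0 by simp
next
  case (insert x F)
  have e: "sum f (insert x F) = f x + sum f F" using insert(1,2) by (rule sum.insert)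
  have "pint p (f x)" using insert.prems by blast
  moreover have "pint p (sum f F)" using insert.prems by (intro insert.IH) blast
  ultimately show ?case unfolding e by (rule pint_add)
qed

lemma cg_rat_cong: "cg (int p) x y \<Longrightarrow> rat_cong x y (int p)"
proof -
  assume "cg (int p) x y"
  then obtain z where z: "pint (int p) z" "x - y = of_int p * z" unfolding cg_def by (elim exE conjE) 
  then obtain a b :: int where h0: "b \<noteq> 0" "coprime b (int p)" "z = of_int a / of_int b"
    unfolding pint_def by (elim exE conjE) 
  have h: "b \<noteq> 0" "coprime b (int p)" "x - y = of_int p * (of_int a / of_int b)"
    using h0 z(2) by auto
  show ?thesis unfolding rat_cong_def
  proof (rule exI[of _ "int p * a"], rule exI[of _ b], intro conjI)
    show "b \<noteq> 0" by (fact h(1))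
    show "coprime b (int p)" by (fact h(2))
    show "int p dvd int p * a" by (rule dvd_triv_left)
    show "x - y = of_int (int p * a) / of_int b" using h(3) by (simp only: of_int_mult times_divide_eq_right)
  qed
qed

lemma cg_refl: "x = y \<Longrightarrow> cg p x y"
  unfolding cg_def by (rule exI[of _ 0]) (simp add: pint_0)

lemma cg_add: "cg p x y \<Longrightarrow> cg p u v \<Longrightarrow> cg p (x + u) (y + v)"
  unfolding cg_def
proof (elim exE conjE)
  fix z w assume "pint p z" "x - y = of_int p * z" "pint p w" "u - v = of_int p * w"
  then show "\<exists>z. pint p z \<and> x + u - (y + v) = of_int p * z"
    by (intro exI[of _ "z+w"]) (auto intro: pint_add simp: algebra_simps)
qed

lemma cg_trans: "cg p x y \<Longrightarrow> cg p y u \<Longrightarrow> cg p x u"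
  using cg_add[of p x y y u] unfolding cg_def by simp

lemma cg_multl: "pint p c \<Longrightarrow> cg p x y \<Longrightarrow> cg p (c * x) (c * y)"
  unfolding cg_def
proof (elim exE conjE)
  fix z assume "pint p c" "pint p z" "x - y = of_int p * z"
  then show "\<exists>w. pint p w \<and> c * x - c * y = of_int p * w"
    by (intro exI[of _ "c*z"]) (auto intro: pint_mult simp: algebra_simps)
qed

lemma cg_sum: "(\<And>i. i \<in> A \<Longrightarrow> cg p (f i) (g i)) \<Longrightarrow> cg p (sum f A) (sum g A)"
proof (induction A rule: infinite_finite_induct)
  case (infinite A)
  then show ?case by (simp add: cg_refl)
next
  case empty
  then show ?case by (simp add: cg_refl)
next
  case (insert x F)
  have e: "sum f (insert x F) = f x + sum f F" "sum g (insert x F) = g x + sum g F"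
    using insert(1,2) by (rule sum.insert)+
  have "cg p (f x) (g x)" using insert.prems by blast
  moreover have "cg p (sum f F) (sum g F)" using insert.prems by (intro insert.IH) blast
  ultimately show ?case unfolding e by (rule cg_add)
qed

lemma cop_lt: "prime (p::nat) \<Longrightarrow> 0 < m \<Longrightarrow> m < p \<Longrightarrow> coprime (int m) (int p)"
proof -
  assume a: "prime p" "0 < m" "m < p"
  have "\<not> p dvd m"
  proof
    assume "p dvd m"
    then have "p \<le> m" using a(2) by (rule dvd_imp_le)
    then show False using a(3) by simp
  qed
  then have "coprime p m" by (rule prime_imp_coprime[OF a(1)])
  then have "coprime m p" by (simp only: coprime_commute)
  then show ?thesis by (simp only: coprime_int_iff)
qed


lemma harm:
  assumes p: "prime p" "p > 2" and k: "1 \<le> k" "2*k < p"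
  shows "cg (int p) (H (p-k)) (H (k-1))"
proof -
  define X where "X = (\<Sum>m=k..p-k. 1 / (of_nat m::rat))"
  have "{1..p-k} = {1..k-1} \<union> {k..p-k}" using k by auto
  then have sp: "H (p-k) = H (k-1) + X" unfolding H_def X_def
    by (simp add: sum.union_disjoint[symmetric])
  have r: "X = (\<Sum>m=k..p-k. 1 / (of_nat (p-m)::rat))" unfolding X_def
    by (rule sum.reindex_bij_witness[of _ "\<lambda>m. p-m" "\<lambda>m. p-m"]) (use k in auto)
  define Y where "Y = (\<Sum>m=k..p-k. 1 / (of_int (int m * int (p-m))::rat))"
  have "2 * X = (\<Sum>m=k..p-k. 1 / (of_nat m::rat) + 1 / (of_nat (p-m)::rat))"
    by (subst sum.distrib) (metis X_def r mult_2)
  also have "\<dots> = of_int (int p) * Y" unfolding Y_def sum_distrib_left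
  proof (intro sum.cong refl)
    fix m assume "m \<in> {k..p-k}"
    then have "0 < m" "m < p" using k by auto
    then show "1 / (of_nat m::rat) + 1 / (of_nat (p-m)::rat) = of_int (int p) * (1 / (of_int (int m * int (p-m))))"
      by (simp add: field_simps of_nat_diff)
  qed
  finally have X: "X = of_int (int p) * ((1 / of_int 2) * Y)" by simp
  have pY: "pint (int p) Y" unfolding Y_def
  proof (rule pint_sum, rule pint_inv)
    fix m assume "m \<in> {k..p-k}"
    then have "0 < m" "m < p" using k by auto
    then show "int m * int (p - m) \<noteq> 0" "coprime (int m * int (p - m)) (int p)"
      using cop_lt[OF p(1), of m] cop_lt[OF p(1), of "p-m"] by auto
  qed
  have p2: "pint (int p) (1 / of_int 2)"
    by (rule pint_inv) (use cop_lt[OF p(1), of 2] p in auto)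
  show ?thesis unfolding cg_def sp using X pint_mult[OF p2 pY] by auto
qed


lemma binc:
  assumes p: "prime p" and i: "1 \<le> i" "i \<le> k" and kp: "k < p"
  shows "cg (int p) (of_nat ((p-k) choose i) / of_nat i) ((-1)^i * of_nat ((k+i-1) choose i) / of_nat i)"
proof -
  define P1 where "P1 = (\<Prod>t=0..<i. int (p-k) - int t)"
  define P2 where "P2 = (\<Prod>t=0..<i. - int k - int t)"
  have e1: "fact i * (of_nat ((p-k) choose i) :: rat) = of_int P1"
    unfolding binomial_gbinomial gbinomial_mult_fact P1_def of_int_prod by simp
  have g: "(of_nat k + of_nat i - 1 :: rat) = of_nat (k+i-1)" using i by (simp add: of_nat_diff)
  have e2: "fact i * ((-1)^i * of_nat ((k+i-1) choose i) :: rat) = of_int P2"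
    unfolding binomial_gbinomial g[symmetric] gbinomial_minus[symmetric] gbinomial_mult_fact P2_def of_int_prod
    by simp
  have "[P1 = P2] (mod int p)" unfolding P1_def P2_def
    by (rule cong_prod) (use kp in \<open>auto simp: cong_iff_dvd_diff of_nat_diff\<close>)
  then obtain q where q: "P1 - P2 = int p * q" unfolding cong_iff_dvd_diff by (auto elim: dvdE)
  define b where "b = int (fact i * i)"
  have bnz: "b \<noteq> 0" unfolding b_def using i by simp
  have "\<not> p dvd fact i * i" using p i kp prime_dvd_fact_iff[OF p, of i] prime_dvd_mult_iff[OF p]
    by (metis dvd_imp_le le_trans less_le_not_le linorder_not_less not_one_le_zero)
  then have cb: "coprime b (int p)" unfolding b_def using p
    by (metis coprime_commute coprime_int_iff prime_imp_coprime)
  have "of_nat ((p-k) choose i) / of_nat i - (-1)^i * of_nat ((k+i-1) choose i) / of_nat i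
        = (of_int P1 - of_int P2) / (fact i * of_nat i :: rat)"
    using e1[symmetric] e2[symmetric] i by (simp add: field_simps)
  also have "\<dots> = of_int (int p) * (of_int q * (1 / of_int b))"
    using q unfolding b_def by (simp add: of_int_diff[symmetric] del: of_int_diff)
  finally show ?thesis unfolding cg_def
    using pint_mult[OF pint_int pint_inv[OF bnz cb]] by blast
qed



theorem lemma2p3:
  fixes p k :: nat
  assumes "prime p" and "p > 3" and "1 \<le> k" and "k \<le> (p - 1) div 2"
  shows "rat_cong
           (\<Sum>j = 2..p - 2 * k. of_nat ((k + j - 1) choose k) / of_nat (k + j))
           ((-1) ^ k * (3 / 2 * (\<Sum>j = 1..k. of_nat ((2 * j) choose j) / of_nat j)
                         - of_nat ((2 * k) choose k) / of_nat k)
            - 1 / of_nat (k + 1))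
           (int p)"
proof -
  have k2: "2*k < p" using assms(4) assms(2) by linarith
  define f where "f m = (of_nat ((m-1) choose k) / of_nat m :: rat)" for m
  define F where "F = (\<Sum>m=1..p-k. f m)"
  have U: "{1..p-k} = {1..Suc k} \<union> {2+k..p-2*k+k}" using k2 by auto
  have "F = (\<Sum>m=1..Suc k. f m) + (\<Sum>m=2+k..p-2*k+k. f m)" unfolding F_def U
    by (rule sum.union_disjoint) auto
  also have "(\<Sum>m=1..Suc k. f m) = 1 / of_nat (k+1)"
  proof -
    have "(\<Sum>m=1..k. f m) = 0" unfolding f_def by (intro sum.neutral) auto
    then show ?thesis by (simp add: f_def)
  qed
  also have "(\<Sum>m=2+k..p-2*k+k. f m) = (\<Sum>j = 2..p - 2 * k. of_nat ((k + j - 1) choose k) / of_nat (k + j))"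
    unfolding sum.shift_bounds_cl_nat_ivl f_def by (simp add: add.commute)
  finally have S: "(\<Sum>j = 2..p - 2 * k. of_nat ((k + j - 1) choose k) / of_nat (k + j)) = F - 1 / of_nat (k+1)"
    by simp
  have F2: "F = (-1)^k * H (p-k) + (\<Sum>i=1..k. of_int ((-1)^(k-i)) * (of_nat ((p-k) choose i) / of_nat i))"
    unfolding F_def f_def F_id by simp
  have "cg (int p) F ((-1)^k * H (k-1) + (\<Sum>i=1..k. of_int ((-1)^(k-i)) * ((-1)^i * of_nat ((k+i-1) choose i) / of_nat i)))"
    unfolding F2
  proof (rule cg_add)
    show "cg (int p) ((-1)^k * H (p-k)) ((-1)^k * H (k-1))"
      using cg_multl[OF pint_int[of _ "(-1)^k"] harm[OF assms(1) _ assms(3) k2]] assms(2) by simp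
    show "cg (int p) (\<Sum>i=1..k. of_int ((-1)^(k-i)) * (of_nat ((p-k) choose i) / of_nat i))
       (\<Sum>i=1..k. of_int ((-1)^(k-i)) * ((-1)^i * of_nat ((k+i-1) choose i) / of_nat i))"
      by (rule cg_sum, rule cg_multl[OF pint_int], rule binc[OF assms(1)]) (use k2 in auto)
  qed
  also have "(\<Sum>i=1..k. of_int ((-1)^(k-i)) * ((-1)^i * of_nat ((k+i-1) choose i) / of_nat i)) = (-1)^k * B k"
    unfolding B_def sum_distrib_left
  proof (intro sum.cong refl)
    fix i assume "i \<in> {1..k}"
    then have "(-1::rat)^(k-i) * (-1)^i = (-1)^k" by (simp add: power_add[symmetric])
    then show "of_int ((-1)^(k-i)) * ((-1)^i * of_nat ((k+i-1) choose i) / of_nat i) = (-1::rat)^k * (of_nat ((k+i-1) choose i) / of_nat i)"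
      by (simp add: mult.assoc[symmetric])
  qed
  finally have "cg (int p) F ((-1)^k * (H (k-1) + B k))" by (simp add: algebra_simps)
  then have "cg (int p) F ((-1) ^ k * (3 / 2 * (\<Sum>j = 1..k. of_nat ((2 * j) choose j) / of_nat j)
                         - of_nat ((2 * k) choose k) / of_nat k))"
    unfolding A_id[OF assms(3)] .
  from cg_add[OF this cg_refl[of "- 1 / of_nat (k+1)" "- 1 / of_nat (k+1)"]]
  show ?thesis unfolding S by (intro cg_rat_cong) simp
qed

end
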